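(* Let $H$ be a finite set, $S\subseteq\wp(H)$, $\mathcal{G}\subseteq S$, and fix $\alpha\in(0,1/2)$. Take $\kappa=\nu$, the classical rough inclusion function. Then there exist a set of integers $K\subseteq\{-1,0,1,2,\dots\}$ and a partition $\{S_i\}_{i\in K}$ of $S$ into nonempty blocks such that for every $i\in K$ and every $x\in S_i$, $x^{u_{\alpha^*}}=x^{u_i}$.
   Context: $\nu(A,B)=\#(A\cap B)/\#(A)$ if $A\neq\emptyset$ and $\nu(A,B)=1$ if $A=\emptyset$. For $x\in S$: $x^{u_{\alpha^*}}=\bigcup\{h\in\mathcal{G}:\nu(x,h)>\alpha\}$, and for an integer $k\ge -1$ the $k$-graded upper approximation is $x^{u_k}=\bigcup\{h\in\mathcal{G}:\#(h\cap x)>k\}$ (empty union $=\emptyset$). *)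

theory Defs
  imports Complex_Main
begin

definition rough_nu :: "'a set \<Rightarrow> 'a set \<Rightarrow> real" where
  "rough_nu A B = (if A = {} then 1 else real (card (A \<inter> B)) / real (card A))"

definition upper_alpha :: "'a set set \<Rightarrow> real \<Rightarrow> 'a set \<Rightarrow> 'a set" where
  "upper_alpha G \<alpha> x = \<Union> {h \<in> G. rough_nu x h > \<alpha>}"

definition upper_graded :: "'a set set \<Rightarrow> int \<Rightarrow> 'a set \<Rightarrow> 'a set" where
  "upper_graded G k x = \<Union> {h \<in> G. int (card (h \<inter> x)) > k}"

end

theory Submission
  imports Defs
begin

lemma key:
  assumes "finite x" "0 < \<alpha>" "\<alpha> < 1"
  shows "upper_alpha G \<alpha> x = upper_graded G (if x = {} then -1 else \<lfloor>\<alpha> * real (card x)\<rfloor>) x"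
proof (cases "x = {}")
  case True
  then show ?thesis using assms by (simp add: upper_alpha_def upper_graded_def rough_nu_def)
next
  case False
  then have cx: "real (card x) > 0" using assms(1) by (simp add: card_gt_0_iff)
  have "\<And>h. rough_nu x h > \<alpha> \<longleftrightarrow> int (card (h \<inter> x)) > \<lfloor>\<alpha> * real (card x)\<rfloor>"
  proof -
    fix h
    have "rough_nu x h > \<alpha> \<longleftrightarrow> real (card (x \<inter> h)) > \<alpha> * real (card x)"
      using False cx by (simp add: rough_nu_def pos_less_divide_eq)
    also have "\<dots> \<longleftrightarrow> int (card (h \<inter> x)) > \<lfloor>\<alpha> * real (card x)\<rfloor>"
      by (simp add: Int_commute floor_less_iff)
    finally show "rough_nu x h > \<alpha> \<longleftrightarrow> int (card (h \<inter> x)) > \<lfloor>\<alpha> * real (card x)\<rfloor>" .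
  qed
  then show ?thesis using False by (simp add: upper_alpha_def upper_graded_def)
qed

theorem mainTheorem10:
  fixes H :: "'a set" and S G :: "'a set set" and \<alpha> :: real
  assumes "finite H" and "S \<subseteq> Pow H" and "G \<subseteq> S"
    and "0 < \<alpha>" and "\<alpha> < 1/2"
  shows "\<exists>(K :: int set) (P :: int \<Rightarrow> 'a set set).
           (\<forall>i\<in>K. -1 \<le> i) \<and>
           (\<forall>i\<in>K. P i \<noteq> {}) \<and>
           (\<forall>i\<in>K. \<forall>j\<in>K. i \<noteq> j \<longrightarrow> P i \<inter> P j = {}) \<and>
           (\<Union>i\<in>K. P i) = S \<and>
           (\<forall>i\<in>K. \<forall>x\<in>P i. upper_alpha G \<alpha> x = upper_graded G i x)"
proof -
  define k where "k x = (if x = {} then -1 else \<lfloor>\<alpha> * real (card x)\<rfloor>)" for x :: "'a set"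
  have kge: "-1 \<le> k x" for x
    using assms(4) by (simp add: k_def) (smt (verit) mult_nonneg_nonneg of_nat_0_le_iff zero_le_floor)
  have fin: "x \<in> S \<Longrightarrow> finite x" for x
    using assms(1,2) finite_subset by blast
  have kk: "x \<in> S \<Longrightarrow> upper_alpha G \<alpha> x = upper_graded G (k x) x" for x
    unfolding k_def using key[OF fin assms(4)] assms(5) by simp
  show ?thesis
    apply (rule exI[of _ "k ` S"], rule exI[of _ "\<lambda>i. {x\<in>S. k x = i}"])
    using kge kk by auto
qed

end
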